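(* Let $\mathcal I$ be partial. For any policy $\pi$ with shielded policy $\pi'=\mathcal G(\pi)$, $$\bar V^\pi(d_0)\le\bar V^{\pi'}(d_0)+\frac1{1-\gamma}\mathbb E_{(s,a)\sim\tilde d^\pi}\big[\mathbb 1\{(s,a)\in\mathcal I\}\big].$$
   Context: $\mathcal M=(\mathcal S,\mathcal A,P,r,\gamma)$ is a discounted MDP with discrete state and action spaces, discount $\gamma\in[0,1)$, initial distribution $d_0$. $\mathcal S$ contains two distinguished states $s_\triangleright,s_\circ$; $\mathcal S_{\mathrm{safe}}=\mathcal S\setminus\{s_\triangleright,s_\circ\}$; from $s_\triangleright$ every action leads to $s_\circ$ w.p. 1, $s_\circ$ is absorbing, $d_0(s_\circ)=0$. Cost $c(s,a)=\mathbb 1\{s=s_\triangleright\}$; $\bar V^\pi(d_0)=\mathbb E[\sum_t\gamma^tc(s_t,a_t)]$ for trajectories of the stationary policy $\pi$ in $\mathcal M$ with $s_0\sim d_0$. An intervention rule $\mathcal G=(\bar Q,\mu,\eta)$ (backup policy $\mu$, $\eta\in[0,1]$, $\bar Q:\mathcal S_{\mathrm{safe}}\times\mathcal A\to[0,1]$) has intervention set $\mathcal I=\{(s,a)\in\mathcal S_{\mathrm{safe}}\times\mathcal A:\bar Q(s,a)-\mathbb E_{a'\sim\mu(\cdot|s)}\bar Q(s,a')>\eta\}$ and shielded policy $\mathcal G(\pi)(a|s)=\pi(a|s)\mathbb 1\{(s,a)\notin\mathcal I\}+w(s)\mu(a|s)$, $w(s)=\sum_{\tilde a:(s,\tilde a)\in\mathcal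 I}\pi(\tilde a|s)$. A set $\mathcal X\subseteq\mathcal S_{\mathrm{safe}}\times\mathcal A$ is partial if for every $(s,a)\in\mathcal X$ there is $a'$ with $(s,a')\notin\mathcal X$. The absorbing MDP $\tilde{\mathcal M}$ (for a constant $\tilde R\le0$) has state space $\mathcal S\cup\{s_\dagger\}$, reward $\tilde R$ on $\mathcal I$, $0$ at $s_\dagger$, $r$ otherwise, and from $(s,a)\in\mathcal I$ or from $s_\dagger$ moves to $s_\dagger$ w.p. 1, otherwise follows $P$; policies are extended to $s_\dagger$ arbitrarily; $\tilde d^\pi(s,a)=(1-\gamma)\sum_t\gamma^t\Pr(s_t=s,a_t=a)$ for trajectories of $\pi$ in $\tilde{\mathcal M}$ with $s_0\sim d_0$. *)

theory Defs
  imports "HOL-Probability.Probability"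
begin

text \<open>Discrete MDPs: states of type 's, actions of type 'a (the action space is the
whole type), transition kernel P :: 's => 'a => 's pmf, stationary policies
's => 'a pmf, initial distribution d0 :: 's pmf.\<close>

primrec state_dist :: "('s \<Rightarrow> 'a \<Rightarrow> 's pmf) \<Rightarrow> ('s \<Rightarrow> 'a pmf) \<Rightarrow> 's pmf \<Rightarrow> nat \<Rightarrow> 's pmf" where
  "state_dist K pol d0 0 = d0"
| "state_dist K pol d0 (Suc t) = bind_pmf (state_dist K pol d0 t) (\<lambda>s. bind_pmf (pol s) (\<lambda>a. K s a))"

definition sa_dist :: "('s \<Rightarrow> 'a \<Rightarrow> 's pmf) \<Rightarrow> ('s \<Rightarrow> 'a pmf) \<Rightarrow> 's pmf \<Rightarrow> nat \<Rightarrow> ('s \<times> 'a) pmf" where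
  "sa_dist K pol d0 t = bind_pmf (state_dist K pol d0 t) (\<lambda>s. map_pmf (\<lambda>a. (s, a)) (pol s))"

definition cost :: "'s \<Rightarrow> 's \<Rightarrow> 'a \<Rightarrow> real" where
  "cost s_tri s a = (if s = s_tri then 1 else 0)"

definition cost_value :: "real \<Rightarrow> 's \<Rightarrow> ('s \<Rightarrow> 'a \<Rightarrow> 's pmf) \<Rightarrow> ('s \<Rightarrow> 'a pmf) \<Rightarrow> 's pmf \<Rightarrow> real" where
  "cost_value \<gamma> s_tri P pol d0 =
     (\<Sum>t. \<gamma> ^ t * measure_pmf.expectation (sa_dist P pol d0 t) (\<lambda>(s, a). cost s_tri s a))"

definition interv_set :: "'s \<Rightarrow> 's \<Rightarrow> ('s \<Rightarrow> 'a \<Rightarrow> real) \<Rightarrow> ('s \<Rightarrow> 'a pmf) \<Rightarrow> real \<Rightarrow> ('s \<times> 'a) set" where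
  "interv_set s_tri s_circ Q mu \<eta> =
     {(s, a). s \<noteq> s_tri \<and> s \<noteq> s_circ \<and>
              Q s a - measure_pmf.expectation (mu s) (\<lambda>a'. Q s a') > \<eta>}"

definition partial_set :: "('s \<times> 'a) set \<Rightarrow> bool" where
  "partial_set X \<longleftrightarrow> (\<forall>(s, a) \<in> X. \<exists>a'. (s, a') \<notin> X)"

definition shielded :: "('s \<times> 'a) set \<Rightarrow> ('s \<Rightarrow> 'a pmf) \<Rightarrow> ('s \<Rightarrow> 'a pmf) \<Rightarrow> 's \<Rightarrow> 'a pmf" where
  "shielded I mu pol s = embed_pmf (\<lambda>a.
      pmf (pol s) a * (if (s, a) \<notin> I then 1 else 0)
      + measure_pmf.prob (pol s) {a'. (s, a') \<in> I} * pmf (mu s) a)"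

text \<open>Absorbing MDP: state space 's option, None = s_dagger.\<close>
definition absorb_kernel :: "('s \<times> 'a) set \<Rightarrow> ('s \<Rightarrow> 'a \<Rightarrow> 's pmf) \<Rightarrow> 's option \<Rightarrow> 'a \<Rightarrow> 's option pmf" where
  "absorb_kernel I P x a = (case x of
      None \<Rightarrow> return_pmf None
    | Some s \<Rightarrow> (if (s, a) \<in> I then return_pmf None else map_pmf Some (P s a)))"

definition ext_policy :: "('s \<Rightarrow> 'a pmf) \<Rightarrow> 'a pmf \<Rightarrow> 's option \<Rightarrow> 'a pmf" where
  "ext_policy pol pi_dag x = (case x of None \<Rightarrow> pi_dag | Some s \<Rightarrow> pol s)"

definition absorb_occ :: "real \<Rightarrow> ('s \<times> 'a) set \<Rightarrow> ('s \<Rightarrow> 'a \<Rightarrow> 's pmf) \<Rightarrow> ('s \<Rightarrow> 'a pmf) \<Rightarrow> 'a pmf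
     \<Rightarrow> 's pmf \<Rightarrow> 's option \<times> 'a \<Rightarrow> real" where
  "absorb_occ \<gamma> I P pol pi_dag d0 x =
     (1 - \<gamma>) * (\<Sum>t. \<gamma> ^ t * pmf (sa_dist (absorb_kernel I P) (ext_policy pol pi_dag) (map_pmf Some d0) t) x)"

end

theory Submission
  imports Defs
begin


definition fK :: "('s\<times>'a) set \<Rightarrow> ('s \<Rightarrow> 'a \<Rightarrow> 's pmf) \<Rightarrow> ('s\<times>bool) \<Rightarrow> 'a \<Rightarrow> ('s\<times>bool) pmf" where
  "fK I P x a = map_pmf (\<lambda>s'. (s', snd x \<and> (fst x, a) \<notin> I)) (P (fst x) a)"

definition proj :: "'s\<times>bool \<Rightarrow> 's option" where
  "proj x = (if snd x then Some (fst x) else None)"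

lemma L1: "map_pmf fst (state_dist (fK I P) (\<lambda>x. pol (fst x)) (map_pmf (\<lambda>s. (s,True)) d0) t)
   = state_dist P pol d0 t"
proof (induction t)
  case 0 then show ?case by (simp add: pmf.map_comp o_def)
next
  case (Suc t)
  show ?case
    by (simp add: map_bind_pmf fK_def pmf.map_comp o_def bind_map_pmf flip: Suc)
qed

lemma absorb_None: "absorb_kernel I P None = (\<lambda>a. return_pmf None)"
  by (rule ext) (simp add: absorb_kernel_def)

lemma L2: "map_pmf proj (state_dist (fK I P) (\<lambda>x. pol (fst x)) (map_pmf (\<lambda>s. (s,True)) d0) t)
   = state_dist (absorb_kernel I P) (ext_policy pol pi_dag) (map_pmf Some d0) t"
proof (induction t)
  case 0 then show ?case by (simp add: pmf.map_comp o_def proj_def)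
next
  case (Suc t)
  show ?case
    apply (simp add: map_bind_pmf flip: Suc)
    apply (simp add: bind_map_pmf)
    apply (rule bind_pmf_cong, simp)
    apply (auto simp: proj_def fK_def ext_policy_def absorb_kernel_def map_bind_pmf bind_return_pmf absorb_None pmf.map_comp o_def
       intro!: bind_pmf_cong)
    done
qed


lemma shielded_pmf:
  "pmf (shielded I mu pol s) a = pmf (pol s) a * (if (s, a) \<notin> I then 1 else 0)
      + measure_pmf.prob (pol s) {a'. (s, a') \<in> I} * pmf (mu s) a"
proof -
  define C where "C = {a. (s,a) \<notin> I}"
  define w where "w = measure_pmf.prob (pol s) {a'. (s, a') \<in> I}"
  have w0: "0 \<le> w" by (simp add: w_def)
  have "(\<integral>\<^sup>+a. ennreal (pmf (pol s) a * (if (s, a) \<notin> I then 1 else 0) + w * pmf (mu s) a) \<partial>count_space UNIV)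
     = (\<integral>\<^sup>+a. ennreal (pmf (pol s) a) * indicator C a + ennreal w * ennreal (pmf (mu s) a) \<partial>count_space UNIV)"
  proof (rule nn_integral_cong)
    fix a
    have "ennreal (pmf (pol s) a * (if (s, a) \<notin> I then 1 else 0) + w * pmf (mu s) a)
       = ennreal (pmf (pol s) a * (if (s, a) \<notin> I then 1 else 0)) + ennreal (w * pmf (mu s) a)"
      by (rule ennreal_plus) (auto simp: w0)
    also have "\<dots> = ennreal (pmf (pol s) a) * indicator C a + ennreal w * ennreal (pmf (mu s) a)"
      by (auto simp: C_def w0 ennreal_mult indicator_def)
    finally show "ennreal (pmf (pol s) a * (if (s, a) \<notin> I then 1 else 0) + w * pmf (mu s) a) = ennreal (pmf (pol s) a) * indicator C a + ennreal w * ennreal (pmf (mu s) a)" .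
  qed
  also have "\<dots> = (\<integral>\<^sup>+a. ennreal (pmf (pol s) a) * indicator C a \<partial>count_space UNIV) + ennreal w * (\<integral>\<^sup>+a. ennreal (pmf (mu s) a) \<partial>count_space UNIV)"
    by (simp add: nn_integral_add nn_integral_cmult)
  also have "\<dots> = emeasure (pol s) C + ennreal w"
    by (simp add: nn_integral_count_space_indicator[symmetric] nn_integral_pmf)
  also have "\<dots> = ennreal (measure_pmf.prob (pol s) C + w)"
    by (simp add: measure_pmf.emeasure_eq_measure w0)
  also have "measure_pmf.prob (pol s) C + w = 1"
    unfolding w_def C_def using measure_pmf.prob_compl[of "{a'. (s, a') \<in> I}" "pol s"]
    by (simp add: Compl_eq_Diff_UNIV[symmetric] Compl_eq)
  finally have 1: "(\<integral>\<^sup>+a. ennreal (pmf (pol s) a * (if (s, a) \<notin> I then 1 else 0) + w * pmf (mu s) a) \<partial>count_space UNIV) = 1"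
    by simp
  show ?thesis unfolding shielded_def w_def[symmetric]
    by (rule pmf_embed_pmf) (use 1 w0 in auto)
qed


lemma inner_dom:
  assumes dom: "\<And>a. (s,a) \<notin> I \<Longrightarrow> pmf (pol s) a \<le> pmf (pol' s) a"
  shows "ennreal (pmf (bind_pmf (pol s) (absorb_kernel I P (Some s))) (Some s0))
      \<le> ennreal (pmf (bind_pmf (pol' s) (P s)) s0)"
proof -
  have "ennreal (pmf (bind_pmf (pol s) (absorb_kernel I P (Some s))) (Some s0))
     = (\<integral>\<^sup>+a. ennreal (pmf (pol s) a) * ennreal (pmf (absorb_kernel I P (Some s) a) (Some s0)) \<partial>count_space UNIV)"
    by (simp add: ennreal_pmf_bind nn_integral_measure_pmf)
  also have "\<dots> \<le> (\<integral>\<^sup>+a. ennreal (pmf (pol' s) a) * ennreal (pmf (P s a) s0) \<partial>count_space UNIV)"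
  proof (rule nn_integral_mono)
    fix a
    show "ennreal (pmf (pol s) a) * ennreal (pmf (absorb_kernel I P (Some s) a) (Some s0))
       \<le> ennreal (pmf (pol' s) a) * ennreal (pmf (P s a) s0)"
    proof (cases "(s,a) \<in> I")
      case True then show ?thesis by (simp add: absorb_kernel_def)
    next
      case False
      then have "pmf (absorb_kernel I P (Some s) a) (Some s0) = pmf (P s a) s0"
        by (simp add: absorb_kernel_def pmf_map_inj')
      with False dom show ?thesis by (auto intro!: mult_right_mono)
    qed
  qed
  also have "\<dots> = ennreal (pmf (bind_pmf (pol' s) (P s)) s0)"
    by (simp add: ennreal_pmf_bind nn_integral_measure_pmf)
  finally show ?thesis .
qed

lemma L3:
  assumes dom: "\<And>s a. (s,a) \<notin> I \<Longrightarrow> pmf (pol s) a \<le> pmf (pol' s) a"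
  shows "pmf (state_dist (absorb_kernel I P) (ext_policy pol pi_dag) (map_pmf Some d0) t) (Some s0)
     \<le> pmf (state_dist P pol' d0 t) s0"
proof (induction t arbitrary: s0)
  case 0 then show ?case by (simp add: pmf_map_inj')
next
  case (Suc t)
  define D where "D = state_dist (absorb_kernel I P) (ext_policy pol pi_dag) (map_pmf Some d0) t"
  define d where "d = state_dist P pol' d0 t"
  define g where "g = (\<lambda>z. case z of None \<Rightarrow> 0 | Some s \<Rightarrow> ennreal (pmf (bind_pmf (pol' s) (P s)) s0))"
  have "ennreal (pmf (state_dist (absorb_kernel I P) (ext_policy pol pi_dag) (map_pmf Some d0) (Suc t)) (Some s0))
    = (\<integral>\<^sup>+z. ennreal (pmf D z) * ennreal (pmf (bind_pmf (ext_policy pol pi_dag z) (absorb_kernel I P z)) (Some s0)) \<partial>count_space UNIV)"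
    by (simp add: D_def ennreal_pmf_bind nn_integral_measure_pmf)
  also have "\<dots> \<le> (\<integral>\<^sup>+z. ennreal (pmf (map_pmf Some d) z) * g z \<partial>count_space UNIV)"
  proof (rule nn_integral_mono)
    fix z
    show "ennreal (pmf D z) * ennreal (pmf (bind_pmf (ext_policy pol pi_dag z) (absorb_kernel I P z)) (Some s0))
      \<le> ennreal (pmf (map_pmf Some d) z) * g z"
    proof (cases z)
      case None then show ?thesis by (simp add: absorb_None)
    next
      case (Some s)
      have "ennreal (pmf D z) \<le> ennreal (pmf (map_pmf Some d) z)"
        using Suc.IH[of s] by (simp add: Some D_def d_def pmf_map_inj')
      moreover have "ennreal (pmf (bind_pmf (ext_policy pol pi_dag z) (absorb_kernel I P z)) (Some s0)) \<le> g z"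
        using inner_dom[of s I pol pol' P s0] dom by (simp add: Some g_def ext_policy_def)
      ultimately show ?thesis by (rule mult_mono) auto
    qed
  qed
  also have "\<dots> = (\<integral>\<^sup>+z. g z \<partial>map_pmf Some d)"
    by (simp add: nn_integral_measure_pmf)
  also have "\<dots> = (\<integral>\<^sup>+s. ennreal (pmf (bind_pmf (pol' s) (P s)) s0) \<partial>d)"
    by (simp add: g_def)
  also have "\<dots> = ennreal (pmf (state_dist P pol' d0 (Suc t)) s0)"
    by (simp add: d_def ennreal_pmf_bind)
  finally show ?case by (simp add: ennreal_le_iff)
qed


lemma XA_next: "state_dist K pol X0 (Suc t) = bind_pmf (sa_dist K pol X0 t) (\<lambda>(x,a). K x a)"
  by (simp add: sa_dist_def bind_assoc_pmf bind_map_pmf bind_return_pmf map_pmf_def)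

lemma XA_fst: "map_pmf fst (sa_dist K pol X0 t) = state_dist K pol X0 t"
  by (simp add: sa_dist_def map_bind_pmf pmf.map_comp o_def bind_return_pmf')

lemma step_emeasure:
  assumes tri: "\<And>a. P s_tri a = return_pmf s_circ"
    and circ: "\<And>a. P s_circ a = return_pmf s_circ"
    and Isafe: "\<And>s a. (s,a) \<in> I \<Longrightarrow> s \<noteq> s_tri \<and> s \<noteq> s_circ"
  shows "emeasure (state_dist (fK I P) pol' X0 (Suc t)) {x. \<not> snd x \<and> fst x \<noteq> s_circ}
    \<le> emeasure (state_dist (fK I P) pol' X0 t) {x. \<not> snd x \<and> fst x \<noteq> s_tri \<and> fst x \<noteq> s_circ}
      + emeasure (sa_dist (fK I P) pol' X0 t) {(x,a). snd x \<and> (fst x, a) \<in> I}"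
proof -
  define XA where "XA = sa_dist (fK I P) pol' X0 t"
  define Ad where "Ad = {x. \<not> snd x \<and> fst x \<noteq> s_tri \<and> fst x \<noteq> s_circ}"
  define B where "B = {(x,a). snd x \<and> (fst x, a) \<in> I}"
  have "emeasure (state_dist (fK I P) pol' X0 (Suc t)) {x. \<not> snd x \<and> fst x \<noteq> s_circ}
     = (\<integral>\<^sup>+y. emeasure (fK I P (fst y) (snd y)) {x. \<not> snd x \<and> fst x \<noteq> s_circ} \<partial>XA)"
    unfolding XA_def XA_next emeasure_bind_pmf case_prod_beta ..
  also have "\<dots> \<le> (\<integral>\<^sup>+y. indicator (fst -` Ad) y + indicator B y \<partial>XA)"
  proof (rule nn_integral_mono)
    fix y :: "('b\<times>bool)\<times>'a"
    obtain s f a where y: "y = ((s,f),a)" by (metis prod.exhaust)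
    have e: "emeasure (fK I P (fst y) (snd y)) {x. \<not> snd x \<and> fst x \<noteq> s_circ}
       = emeasure (P s a) {s'. \<not> (f \<and> (s,a) \<notin> I) \<and> s' \<noteq> s_circ}"
      by (simp add: y fK_def vimage_def)
    show "emeasure (fK I P (fst y) (snd y)) {x. \<not> snd x \<and> fst x \<noteq> s_circ}
       \<le> indicator (fst -` Ad) y + indicator B y"
    proof (cases "s = s_tri \<or> s = s_circ")
      case True
      then have "P s a = return_pmf s_circ" using tri circ by auto
      then show ?thesis unfolding e by simp
    next
      case False
      show ?thesis
      proof (cases f)
        case False2: False
        have "emeasure (P s a) {s'. \<not> (f \<and> (s,a) \<notin> I) \<and> s' \<noteq> s_circ} \<le> 1"
          by (rule measure_pmf.emeasure_le_1)
        also have "(1::ennreal) \<le> indicator (fst -` Ad) y + indicator B y"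
          using False False2 by (intro add_increasing2) (auto simp: y Ad_def)
        finally show ?thesis unfolding e .
      next
        case True2: True
        show ?thesis
        proof (cases "(s,a) \<in> I")
          case True
          have "emeasure (P s a) {s'. \<not> (f \<and> (s,a) \<notin> I) \<and> s' \<noteq> s_circ} \<le> 1"
            by (rule measure_pmf.emeasure_le_1)
          also have "(1::ennreal) \<le> indicator (fst -` Ad) y + indicator B y"
            using True True2 by (simp add: y B_def)
          finally show ?thesis unfolding e .
        qed (use True2 in \<open>simp add: e\<close>)
      qed
    qed
  qed
  also have "\<dots> = emeasure XA (fst -` Ad) + emeasure XA B"
    by (simp add: nn_integral_add)
  also have "emeasure XA (fst -` Ad) = emeasure (map_pmf fst XA) Ad"
    by simp
  also have "map_pmf fst XA = state_dist (fK I P) pol' X0 t"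
    by (simp add: XA_def XA_fst)
  finally show ?thesis by (simp add: Ad_def B_def XA_def)
qed

lemma step_real:
  assumes tri: "\<And>a. P s_tri a = return_pmf s_circ"
    and circ: "\<And>a. P s_circ a = return_pmf s_circ"
    and Isafe: "\<And>s a. (s,a) \<in> I \<Longrightarrow> s \<noteq> s_tri \<and> s \<noteq> s_circ"
    and dist: "s_tri \<noteq> s_circ"
  shows "measure_pmf.prob (state_dist (fK I P) pol' X0 (Suc t)) {x. \<not> snd x \<and> fst x \<noteq> s_tri \<and> fst x \<noteq> s_circ}
     + measure_pmf.prob (state_dist (fK I P) pol' X0 (Suc t)) {x. \<not> snd x \<and> fst x = s_tri}
    \<le> measure_pmf.prob (state_dist (fK I P) pol' X0 t) {x. \<not> snd x \<and> fst x \<noteq> s_tri \<and> fst x \<noteq> s_circ}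
      + measure_pmf.prob (sa_dist (fK I P) pol' X0 t) {(x,a). snd x \<and> (fst x, a) \<in> I}"
proof -
  have u: "{x. \<not> snd x \<and> fst x \<noteq> s_circ} = {x. \<not> snd x \<and> fst x \<noteq> s_tri \<and> fst x \<noteq> s_circ} \<union> {x. \<not> snd x \<and> fst x = s_tri}"
    using dist by auto
  have "measure_pmf.prob (state_dist (fK I P) pol' X0 (Suc t)) {x. \<not> snd x \<and> fst x \<noteq> s_tri \<and> fst x \<noteq> s_circ}
     + measure_pmf.prob (state_dist (fK I P) pol' X0 (Suc t)) {x. \<not> snd x \<and> fst x = s_tri}
     = measure_pmf.prob (state_dist (fK I P) pol' X0 (Suc t)) {x. \<not> snd x \<and> fst x \<noteq> s_circ}"
    unfolding u by (subst measure_pmf.finite_measure_Union) auto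
  moreover
  define x where "x = measure_pmf.prob (state_dist (fK I P) pol' X0 (Suc t)) {x. \<not> snd x \<and> fst x \<noteq> s_circ}"
  define y where "y = measure_pmf.prob (state_dist (fK I P) pol' X0 t) {x. \<not> snd x \<and> fst x \<noteq> s_tri \<and> fst x \<noteq> s_circ}"
  define z where "z = measure_pmf.prob (sa_dist (fK I P) pol' X0 t) {(x,a). snd x \<and> (fst x, a) \<in> I}"
  have R: "ennreal x \<le> ennreal y + ennreal z"
    using step_emeasure[OF tri circ Isafe, where pol'=pol' and t=t]
    unfolding x_def y_def z_def measure_pmf.emeasure_eq_measure .
  have "ennreal x \<le> ennreal (y + z)"
    by (subst ennreal_plus) (use R in \<open>auto simp: y_def z_def\<close>)
  then have "x \<le> y + z" by (subst (asm) ennreal_le_iff) (auto simp: y_def z_def)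
  ultimately show ?thesis by (simp add: x_def y_def z_def)
qed


lemma telescope:
  fixes a b p :: "nat \<Rightarrow> real"
  assumes st: "\<And>t. a (Suc t) + b (Suc t) \<le> a t + p t" and a0: "a 0 = 0" and b0: "b 0 = 0"
    and an: "\<And>t. a t \<ge> 0" and g: "0 \<le> \<gamma>" "\<gamma> \<le> 1" and pn: "\<And>t. p t \<ge> 0"
  shows "(\<Sum>i\<le>n. \<gamma>^i * b i) + \<gamma>^n * a n \<le> (\<Sum>i<n. \<gamma>^i * p i)"
proof (induction n)
  case 0 then show ?case by (simp add: a0 b0)
next
  case (Suc n)
  have "\<gamma>^Suc n * (a (Suc n) + b (Suc n)) \<le> \<gamma>^Suc n * (a n + p n)"
    by (rule mult_left_mono[OF st]) (use g in simp)
  also have "\<dots> \<le> \<gamma>^n * (a n + p n)"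
    by (rule mult_right_mono) (use g an pn in \<open>auto intro: mult_left_le_one_le\<close>)
  finally have "\<gamma>^Suc n * (a (Suc n) + b (Suc n)) \<le> \<gamma>^n * (a n + p n)" .
  with Suc show ?case by (simp add: algebra_simps)
qed

lemma series_le:
  fixes b p :: "nat \<Rightarrow> real"
  assumes "summable (\<lambda>i. \<gamma>^i * p i)" "\<And>i. 0 \<le> \<gamma>^i * p i"
    "\<And>n. (\<Sum>i\<le>n. \<gamma>^i * b i) \<le> (\<Sum>i<n. \<gamma>^i * p i)"
    "summable (\<lambda>i. \<gamma>^i * b i)" "\<And>i. 0 \<le> \<gamma>^i * b i"
  shows "(\<Sum>i. \<gamma>^i * b i) \<le> (\<Sum>i. \<gamma>^i * p i)"
proof (rule suminf_le_const[OF assms(4)])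
  fix n
  have "(\<Sum>i<n. \<gamma>^i * b i) \<le> (\<Sum>i\<le>n. \<gamma>^i * b i)"
    by (rule sum_mono2) (use assms(5) in auto)
  also have "\<dots> \<le> (\<Sum>i<n. \<gamma>^i * p i)" by (rule assms(3))
  also have "\<dots> \<le> (\<Sum>i. \<gamma>^i * p i)" by (rule sum_le_suminf) (use assms in auto)
  finally show "(\<Sum>i<n. \<gamma>^i * b i) \<le> (\<Sum>i. \<gamma>^i * p i)" .
qed

lemma geo_summable:
  fixes f :: "nat \<Rightarrow> real"
  assumes "0 \<le> \<gamma>" "\<gamma> < 1" "\<And>i. 0 \<le> f i" "\<And>i. f i \<le> 1"
  shows "summable (\<lambda>i. \<gamma>^i * f i)"
proof (rule summable_comparison_test[OF _ summable_geometric[of \<gamma>]])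
  show "\<exists>N. \<forall>n\<ge>N. norm (\<gamma> ^ n * f n) \<le> \<gamma> ^ n"
    using assms by (auto intro!: exI[of _ 0] mult_left_le)
qed (use assms in auto)

lemma infsum_occ:
  fixes S :: "nat \<Rightarrow> 'x pmf"
  assumes g: "0 \<le> \<gamma>" "\<gamma> < 1"
  shows "infsum (\<lambda>x. (1-\<gamma>) * (\<Sum>t. \<gamma>^t * pmf (S t) x)) A = (1-\<gamma>) * (\<Sum>t. \<gamma>^t * measure_pmf.prob (S t) A)"
proof -
  define f where "f = (\<lambda>x. (1-\<gamma>) * (\<Sum>t. \<gamma>^t * pmf (S t) x))"
  have sx: "\<And>x. summable (\<lambda>t. \<gamma>^t * pmf (S t) x)"
    by (rule geo_summable) (use g in \<open>auto simp: pmf_le_1\<close>)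
  have sm: "summable (\<lambda>t. \<gamma>^t * measure_pmf.prob (S t) A)"
    by (rule geo_summable) (use g in auto)
  have fnn: "\<And>x. 0 \<le> f x"
    unfolding f_def by (intro mult_nonneg_nonneg suminf_nonneg) (use g sx in auto)
  have "(\<integral>\<^sup>+x. ennreal (f x) \<partial>count_space A)
      = (\<integral>\<^sup>+x. ennreal (1-\<gamma>) * (\<Sum>t. ennreal (\<gamma>^t * pmf (S t) x)) \<partial>count_space A)"
    unfolding f_def
  proof (intro nn_integral_cong)
    fix x
    have e: "ennreal (\<Sum>t. \<gamma>^t * pmf (S t) x) = (\<Sum>t. ennreal (\<gamma>^t * pmf (S t) x))"
      by (rule suminf_ennreal2[symmetric]) (use g sx in auto)
    show "ennreal ((1-\<gamma>) * (\<Sum>t. \<gamma>^t * pmf (S t) x)) = ennreal (1-\<gamma>) * (\<Sum>t. ennreal (\<gamma>^t * pmf (S t) x))"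
      by (subst ennreal_mult) (use g sx e in \<open>auto intro: suminf_nonneg\<close>)
  qed
  also have "\<dots> = ennreal (1-\<gamma>) * (\<Sum>t. (\<integral>\<^sup>+x. ennreal (\<gamma>^t * pmf (S t) x) \<partial>count_space A))"
    by (simp add: nn_integral_cmult nn_integral_suminf)
  also have "\<dots> = ennreal (1-\<gamma>) * (\<Sum>t. ennreal (\<gamma>^t * measure_pmf.prob (S t) A))"
    using g by (simp add: ennreal_mult nn_integral_cmult nn_integral_pmf measure_pmf.emeasure_eq_measure)
  also have "\<dots> = ennreal ((1-\<gamma>) * (\<Sum>t. \<gamma>^t * measure_pmf.prob (S t) A))"
  proof -
    have e: "ennreal (\<Sum>t. \<gamma>^t * measure_pmf.prob (S t) A) = (\<Sum>t. ennreal (\<gamma>^t * measure_pmf.prob (S t) A))"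
      by (rule suminf_ennreal2[symmetric]) (use g sm in auto)
    show ?thesis
      by (subst ennreal_mult) (use g sm e in \<open>auto intro: suminf_nonneg\<close>)
  qed
  finally have nn: "(\<integral>\<^sup>+x. ennreal (f x) \<partial>count_space A) = ennreal ((1-\<gamma>) * (\<Sum>t. \<gamma>^t * measure_pmf.prob (S t) A))" .
  have vnn: "0 \<le> (1-\<gamma>) * (\<Sum>t. \<gamma>^t * measure_pmf.prob (S t) A)"
    by (intro mult_nonneg_nonneg suminf_nonneg) (use g sm in auto)
  have abs: "Infinite_Set_Sum.abs_summable_on f A"
    unfolding abs_summable_on_def
    by (rule integrableI_nonneg) (use fnn nn in auto)
  have "infsum f A = infsetsum f A" by (rule infsetsum_infsum[symmetric, OF abs])
  also have "\<dots> = enn2real (\<integral>\<^sup>+x. ennreal (f x) \<partial>count_space A)"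
    by (rule infsetsum_conv_nn_integral) (use nn fnn in auto)
  also have "\<dots> = (1-\<gamma>) * (\<Sum>t. \<gamma>^t * measure_pmf.prob (S t) A)"
    using nn vnn by simp
  finally show ?thesis unfolding f_def .
qed

lemma cost_exp:
  "measure_pmf.expectation (sa_dist K q d t) (\<lambda>(s, a). cost s_tri s a) = pmf (state_dist K q d t) s_tri"
proof -
  have "(\<lambda>(s, a). cost s_tri s a) = indicator (fst -` {s_tri})"
    by (auto simp: cost_def indicator_def fun_eq_iff)
  have "measure_pmf.expectation (sa_dist K q d t) (\<lambda>(s, a). cost s_tri s a)
     = measure_pmf.prob (sa_dist K q d t) (fst -` {s_tri})"
    unfolding \<open>(\<lambda>(s, a). cost s_tri s a) = indicator (fst -` {s_tri})\<close>
    by simp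
  also have "\<dots> = measure_pmf.prob (map_pmf fst (sa_dist K q d t)) {s_tri}" by simp
  also have "\<dots> = pmf (state_dist K q d t) s_tri"
    by (simp add: XA_fst measure_pmf_single)
  finally show ?thesis .
qed


theorem mainTheorem18:
  fixes P :: "'s \<Rightarrow> 'a \<Rightarrow> 's pmf" and d0 :: "'s pmf" and \<gamma> :: real
    and s_tri s_circ :: 's
    and Q :: "'s \<Rightarrow> 'a \<Rightarrow> real" and mu :: "'s \<Rightarrow> 'a pmf" and \<eta> :: real
    and pol :: "'s \<Rightarrow> 'a pmf" and pi_dag :: "'a pmf"
  assumes gamma: "0 \<le> \<gamma>" "\<gamma> < 1"
    and distinct: "s_tri \<noteq> s_circ"
    and tri: "\<And>a. P s_tri a = return_pmf s_circ"
    and circ: "\<And>a. P s_circ a = return_pmf s_circ"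
    and d0_circ: "pmf d0 s_circ = 0"
    and Q_range: "\<And>s a. s \<noteq> s_tri \<Longrightarrow> s \<noteq> s_circ \<Longrightarrow> 0 \<le> Q s a \<and> Q s a \<le> 1"
    and eta: "0 \<le> \<eta>" "\<eta> \<le> 1"
    and partial: "partial_set (interv_set s_tri s_circ Q mu \<eta>)"
  shows "cost_value \<gamma> s_tri P pol d0
     \<le> cost_value \<gamma> s_tri P (shielded (interv_set s_tri s_circ Q mu \<eta>) mu pol) d0
       + 1 / (1 - \<gamma>) *
         infsum (absorb_occ \<gamma> (interv_set s_tri s_circ Q mu \<eta>) P pol pi_dag d0)
                {(Some s, a) | s a. (s, a) \<in> interv_set s_tri s_circ Q mu \<eta>}"
proof -
  define I where "I = interv_set s_tri s_circ Q mu \<eta>"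
  define pol' where "pol' = shielded I mu pol"
  define K where "K = fK I P"
  define pf where "pf = (\<lambda>x::'s\<times>bool. pol (fst x))"
  define X0 where "X0 = map_pmf (\<lambda>s. (s,True)) d0"
  define X where "X = (\<lambda>t. state_dist K pf X0 t)"
  define XA where "XA = (\<lambda>t. sa_dist K pf X0 t)"
  define D where "D = (\<lambda>t. state_dist (absorb_kernel I P) (ext_policy pol pi_dag) (map_pmf Some d0) t)"
  define S where "S = (\<lambda>t. sa_dist (absorb_kernel I P) (ext_policy pol pi_dag) (map_pmf Some d0) t)"
  define J where "J = {(Some s, a) | s a. (s, a) \<in> I}"
  define a where "a = (\<lambda>t. measure_pmf.prob (X t) {x. \<not> snd x \<and> fst x \<noteq> s_tri \<and> fst x \<noteq> s_circ})"
  define b where "b = (\<lambda>t. measure_pmf.prob (X t) {x. \<not> snd x \<and> fst x = s_tri})"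
  define p where "p = (\<lambda>t. measure_pmf.prob (XA t) {(x,a). snd x \<and> (fst x, a) \<in> I})"
  have Isafe: "\<And>s a. (s,a) \<in> I \<Longrightarrow> s \<noteq> s_tri \<and> s \<noteq> s_circ"
    by (simp add: I_def interv_set_def)
  have dom: "\<And>s a. (s,a) \<notin> I \<Longrightarrow> pmf (pol s) a \<le> pmf (pol' s) a"
    by (simp add: pol'_def shielded_pmf)
  have step: "\<And>t. a (Suc t) + b (Suc t) \<le> a t + p t"
    unfolding a_def b_def p_def X_def XA_def K_def
    by (rule step_real[OF tri circ Isafe distinct])
  have a0: "a 0 = 0" and b0: "b 0 = 0"
    by (simp_all add: a_def b_def X_def X0_def vimage_def)
  have bnd: "\<And>n. (\<Sum>i\<le>n. \<gamma>^i * b i) \<le> (\<Sum>i<n. \<gamma>^i * p i)"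
  proof -
    fix n
    have "(\<Sum>i\<le>n. \<gamma>^i * b i) + \<gamma>^n * a n \<le> (\<Sum>i<n. \<gamma>^i * p i)"
      by (rule telescope[OF step a0 b0]) (use gamma in \<open>auto simp: a_def p_def\<close>)
    moreover have "0 \<le> \<gamma>^n * a n" using gamma by (simp add: a_def)
    ultimately show "(\<Sum>i\<le>n. \<gamma>^i * b i) \<le> (\<Sum>i<n. \<gamma>^i * p i)" by linarith
  qed
  have sb: "summable (\<lambda>i. \<gamma>^i * b i)"
    by (rule geo_summable) (use gamma in \<open>auto simp: b_def\<close>)
  have sp: "summable (\<lambda>i. \<gamma>^i * p i)"
    by (rule geo_summable) (use gamma in \<open>auto simp: p_def\<close>)
  have ser: "(\<Sum>i. \<gamma>^i * b i) \<le> (\<Sum>i. \<gamma>^i * p i)"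
    by (rule series_le[OF sp _ bnd sb]) (use gamma in \<open>auto simp: b_def p_def\<close>)
  have bpt: "pmf (state_dist P pol d0 t) s_tri \<le> pmf (state_dist P pol' d0 t) s_tri + b t" for t
  proof -
    have "pmf (state_dist P pol d0 t) s_tri = pmf (map_pmf fst (X t)) s_tri"
      by (simp add: X_def K_def pf_def X0_def L1)
    also have "\<dots> = measure_pmf.prob (X t) ({x. snd x \<and> fst x = s_tri} \<union> {x. \<not> snd x \<and> fst x = s_tri})"
      by (simp add: pmf_map vimage_def) (rule arg_cong[where f="measure_pmf.prob (X t)"], auto)
    also have "\<dots> = measure_pmf.prob (X t) {x. snd x \<and> fst x = s_tri} + b t"
      unfolding b_def by (subst measure_pmf.finite_measure_Union) auto
    also have "measure_pmf.prob (X t) {x. snd x \<and> fst x = s_tri} = pmf (map_pmf proj (X t)) (Some s_tri)"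
      by (simp add: pmf_map vimage_def proj_def) (metis (mono_tags, lifting))
    also have "\<dots> = pmf (D t) (Some s_tri)"
      using L2[of I P pol d0 t pi_dag] unfolding X_def K_def pf_def X0_def D_def by simp
    also have "\<dots> \<le> pmf (state_dist P pol' d0 t) s_tri"
      unfolding D_def by (rule L3[OF dom])
    finally show ?thesis by simp
  qed
  have p_eq: "p t = measure_pmf.prob (S t) J" for t
  proof -
    have e1: "S t = bind_pmf (X t) (\<lambda>x. map_pmf (Pair (proj x)) (ext_policy pol pi_dag (proj x)))"
      by (simp add: S_def sa_dist_def X_def K_def pf_def X0_def flip: L2 add: bind_map_pmf)
    have e2: "XA t = bind_pmf (X t) (\<lambda>x. map_pmf (Pair x) (pf x))"
      by (simp add: XA_def X_def sa_dist_def)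
    have "emeasure (XA t) {(x,a). snd x \<and> (fst x, a) \<in> I} = emeasure (S t) J"
      unfolding e1 e2 emeasure_bind_pmf
    proof (intro nn_integral_cong)
      fix x :: "'s \<times> bool"
      show "emeasure (map_pmf (Pair x) (pf x)) {(x,a). snd x \<and> (fst x, a) \<in> I}
          = emeasure (map_pmf (Pair (proj x)) (ext_policy pol pi_dag (proj x))) J"
        by (cases x) (auto simp: proj_def J_def pf_def ext_policy_def vimage_def)
    qed
    then show ?thesis by (simp add: p_def measure_def)
  qed
  have occ: "absorb_occ \<gamma> I P pol pi_dag d0 = (\<lambda>x. (1-\<gamma>) * (\<Sum>t. \<gamma>^t * pmf (S t) x))"
    by (rule ext) (simp add: absorb_occ_def S_def)
  have inf: "1 / (1 - \<gamma>) * infsum (absorb_occ \<gamma> I P pol pi_dag d0) J = (\<Sum>t. \<gamma>^t * p t)"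
    using gamma by (simp add: occ infsum_occ p_eq)
  have sd: "summable (\<lambda>t. \<gamma>^t * pmf (state_dist P pol d0 t) s_tri)"
    by (rule geo_summable) (use gamma in \<open>auto simp: pmf_le_1\<close>)
  have sd': "summable (\<lambda>t. \<gamma>^t * pmf (state_dist P pol' d0 t) s_tri)"
    by (rule geo_summable) (use gamma in \<open>auto simp: pmf_le_1\<close>)
  have "cost_value \<gamma> s_tri P pol d0 = (\<Sum>t. \<gamma>^t * pmf (state_dist P pol d0 t) s_tri)"
    by (simp add: cost_value_def cost_exp)
  also have "\<dots> \<le> (\<Sum>t. \<gamma>^t * pmf (state_dist P pol' d0 t) s_tri + \<gamma>^t * b t)"
  proof (rule suminf_le[OF _ sd summable_add[OF sd' sb]])
    fix t
    have "\<gamma>^t * pmf (state_dist P pol d0 t) s_tri \<le> \<gamma>^t * (pmf (state_dist P pol' d0 t) s_tri + b t)"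
      by (rule mult_left_mono[OF bpt]) (use gamma in simp)
    then show "\<gamma>^t * pmf (state_dist P pol d0 t) s_tri \<le> \<gamma>^t * pmf (state_dist P pol' d0 t) s_tri + \<gamma>^t * b t"
      by (simp add: distrib_left)
  qed
  also have "\<dots> = (\<Sum>t. \<gamma>^t * pmf (state_dist P pol' d0 t) s_tri) + (\<Sum>t. \<gamma>^t * b t)"
    by (rule suminf_add[OF sd' sb, symmetric])
  also have "(\<Sum>t. \<gamma>^t * pmf (state_dist P pol' d0 t) s_tri) = cost_value \<gamma> s_tri P pol' d0"
    by (simp add: cost_value_def cost_exp)
  finally show ?thesis
    using ser inf unfolding I_def[symmetric] pol'_def[symmetric] J_def[symmetric] by linarith
qed

end
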